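(* The On-CT-RSD mechanism is not universally friendship-truthful: there is an instance (with friendship graph of maximum degree $1$) and a realization of the mechanism's random choices under which some agent obtains strictly higher utility by declaring as her friend an agent who is not her friend than by reporting truthfully.
   Context: Instance: agents $N$, $n=|N|$ plots $\mathcal V$, undirected plot graph $(\mathcal V,\mathcal E)$, valuations $u_i:\mathcal V\to[0,1]\cap\mathbb Q$, reciprocal directed friendship relation $F$ with weights $\phi_{i,j}\ge0$. For an allocation (bijection) $A:N\to\mathcal V$, $U_i(A)=u_i(A(i))+\sum_{(i,j)\in F}\phi_{i,j}\mathbb I(\{A(i),A(j)\}\in\mathcal E)$. On-CT-RSD: repeatedly a uniformly random agent among those who have not yet picked is selected; she picks an available plot and may declare another not-yet-picked agent as her friend, in which case that agent picks an available plot next (without declaring a friend); this continues until all agents have plots; agents choose plots to maximize their utility. A randomized mechanism is universally friendship-truthful if, for every choice of its random bits (even if known to the agents), no agent can increase her utility by misreporting friendship information, regardless of what other agents report and which plots they pick. *)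

theory Defs
  imports Complex_Main
begin

text \<open>An instance: agents N, plots V, plot graph edges E (2-element subsets of V),
  valuations u, friendship relation F (pairs (i,j)), weights phi.\<close>

definition valid_instance ::
  "'a set \<Rightarrow> 'v set \<Rightarrow> 'v set set \<Rightarrow> ('a \<Rightarrow> 'v \<Rightarrow> real) \<Rightarrow> ('a \<times> 'a) set
    \<Rightarrow> ('a \<Rightarrow> 'a \<Rightarrow> real) \<Rightarrow> bool" where
  "valid_instance N V E u F phi \<longleftrightarrow>
     finite N \<and> finite V \<and> card V = card N \<and>
     (\<forall>e\<in>E. e \<subseteq> V \<and> card e = 2) \<and>
     (\<forall>a\<in>N. \<forall>v\<in>V. u a v \<in> \<rat> \<and> 0 \<le> u a v \<and> u a v \<le> 1) \<and>
     F \<subseteq> N \<times> N \<and> (\<forall>a. (a, a) \<notin> F) \<and>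
     (\<forall>a b. (a, b) \<in> F \<longrightarrow> (b, a) \<in> F) \<and>
     (\<forall>(a, b)\<in>F. 0 \<le> phi a b)"

definition max_degree_le_one :: "('a \<times> 'a) set \<Rightarrow> bool" where
  "max_degree_le_one F \<longleftrightarrow> (\<forall>a. card {b. (a, b) \<in> F} \<le> 1)"

definition utility ::
  "'v set set \<Rightarrow> ('a \<Rightarrow> 'v \<Rightarrow> real) \<Rightarrow> ('a \<times> 'a) set \<Rightarrow> ('a \<Rightarrow> 'a \<Rightarrow> real)
    \<Rightarrow> 'a \<Rightarrow> ('a \<Rightarrow> 'v) \<Rightarrow> real" where
  "utility E u F phi i A =
     u i (A i) + (\<Sum>j\<in>{j. (i, j) \<in> F}. phi i j * (if {A i, A j} \<in> E then 1 else 0))"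

definition partial_value ::
  "'v set set \<Rightarrow> ('a \<Rightarrow> 'v \<Rightarrow> real) \<Rightarrow> ('a \<times> 'a) set \<Rightarrow> ('a \<Rightarrow> 'a \<Rightarrow> real)
    \<Rightarrow> 'a \<Rightarrow> ('a \<rightharpoonup> 'v) \<Rightarrow> 'v \<Rightarrow> real" where
  "partial_value E u F phi a P v =
     u a v + (\<Sum>j\<in>{j. (a, j) \<in> F \<and> j \<in> dom P}.
                 phi a j * (if {v, the (P j)} \<in> E then 1 else 0))"

definition best_choice ::
  "'v set \<Rightarrow> 'v set set \<Rightarrow> ('a \<Rightarrow> 'v \<Rightarrow> real) \<Rightarrow> ('a \<times> 'a) set \<Rightarrow> ('a \<Rightarrow> 'a \<Rightarrow> real)
    \<Rightarrow> 'a \<Rightarrow> ('a \<rightharpoonup> 'v) \<Rightarrow> 'v \<Rightarrow> bool" where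
  "best_choice V E u F phi a P v \<longleftrightarrow>
     v \<in> V - ran P \<and>
     (\<forall>w\<in>V - ran P. partial_value E u F phi a P w \<le> partial_value E u F phi a P v)"

text \<open>The agent forced to pick next after agent a picked (a declared friend
  that has not yet picked), if any.\<close>

definition forced_next :: "'a set \<Rightarrow> 'a set \<Rightarrow> 'a option \<Rightarrow> 'a option" where
  "forced_next N picked t =
     (case t of None \<Rightarrow> None | Some b \<Rightarrow> if b \<in> N \<and> b \<notin> picked then Some b else None)"

text \<open>Runs of the mechanism for a fixed realization of the random bits, given by a
  priority list sigma (a uniformly random permutation of N): whenever a uniformly random
  not-yet-picked agent is to be selected, the first not-yet-picked agent of sigma is
  selected. d a is the friend agent a declares when she is selected (None = no
  declaration). States: partial allocation and the agent forced to pick next.\<close>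

inductive reach ::
  "'a set \<Rightarrow> 'v set \<Rightarrow> 'v set set \<Rightarrow> ('a \<Rightarrow> 'v \<Rightarrow> real) \<Rightarrow> ('a \<times> 'a) set
    \<Rightarrow> ('a \<Rightarrow> 'a \<Rightarrow> real) \<Rightarrow> 'a list \<Rightarrow> ('a \<Rightarrow> 'a option)
    \<Rightarrow> ('a \<rightharpoonup> 'v) \<Rightarrow> 'a option \<Rightarrow> bool"
  for N V E u F phi sigma d where
  init: "reach N V E u F phi sigma d Map.empty None"
| select: "reach N V E u F phi sigma d P None \<Longrightarrow> dom P \<noteq> N \<Longrightarrow>
     a = hd (filter (\<lambda>x. x \<notin> dom P) sigma) \<Longrightarrow>
     best_choice V E u F phi a P v \<Longrightarrow>
     reach N V E u F phi sigma d (P(a \<mapsto> v)) (forced_next N (insert a (dom P)) (d a))"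
| forced: "reach N V E u F phi sigma d P (Some b) \<Longrightarrow>
     best_choice V E u F phi b P v \<Longrightarrow>
     reach N V E u F phi sigma d (P(b \<mapsto> v)) None"

definition mech_outcome ::
  "'a set \<Rightarrow> 'v set \<Rightarrow> 'v set set \<Rightarrow> ('a \<Rightarrow> 'v \<Rightarrow> real) \<Rightarrow> ('a \<times> 'a) set
    \<Rightarrow> ('a \<Rightarrow> 'a \<Rightarrow> real) \<Rightarrow> 'a list \<Rightarrow> ('a \<Rightarrow> 'a option) \<Rightarrow> ('a \<Rightarrow> 'v) \<Rightarrow> bool" where
  "mech_outcome N V E u F phi sigma d A \<longleftrightarrow>
     (\<exists>P. reach N V E u F phi sigma d P None \<and> dom P = N \<and> (\<forall>a\<in>N. P a = Some (A a)))"

definition truthful_decl :: "('a \<times> 'a) set \<Rightarrow> 'a \<Rightarrow> 'a option \<Rightarrow> bool" where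
  "truthful_decl F a t \<longleftrightarrow> t = None \<or> (\<exists>b. t = Some b \<and> (a, b) \<in> F)"

end

theory Submission
  imports Defs
begin

definition "N0 = ({0,1,2} :: nat set)"
definition "E0 = ({{0,1}} :: nat set set)"
definition "u0 (a::nat) (v::nat) = (if a = 0 then (if v = 0 then 1 else 0) else (if v = 2 then 1 else (0::real)))"
definition "F0 = ({(0,1),(1,0)} :: (nat \<times> nat) set)"
definition "phi0 (a::nat) (b::nat) = (1/2::real)"
definition "sigma0 = [0,1,2::nat]"

lemma F0_mem: "(a,j) \<in> F0 \<longleftrightarrow> (a = 0 \<and> j = 1) \<or> (a = 1 \<and> j = 0)"
  by (auto simp: F0_def)

lemma F0_set: "{j. (a,j) \<in> F0 \<and> j \<in> D} =
   (if a = 0 then (if 1 \<in> D then {1} else {}) else if a = 1 then (if 0 \<in> D then {0} else {}) else {})"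
  by (auto simp: F0_mem)

lemma F0_set2: "{j. (a,j) \<in> F0} = (if a = 0 then {1} else if a = 1 then {0} else {})"
  by (auto simp: F0_mem)

lemma coll_eq: "{j. j = c \<and> P j} = (if P c then {c} else {})"
  by auto

lemmas defs0 = coll_eq F0_mem N0_def E0_def u0_def phi0_def sigma0_def partial_value_def best_choice_def F0_set
  doubleton_eq_iff

lemma bc1: "best_choice N0 E0 u0 F0 phi0 0 Map.empty v \<longleftrightarrow> v = 0"
  by (auto simp: defs0 split: if_splits)

lemma bc2: "best_choice N0 E0 u0 F0 phi0 1 [0 \<mapsto> 0] v \<longleftrightarrow> v = 2"
  by (auto simp: defs0 split: if_splits)

lemma bc3: "best_choice N0 E0 u0 F0 phi0 2 [0 \<mapsto> 0, 1 \<mapsto> 2] v \<longleftrightarrow> v = 1"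
  by (auto simp: defs0 split: if_splits)

lemma bc4: "best_choice N0 E0 u0 F0 phi0 2 [0 \<mapsto> 0] v \<longleftrightarrow> v = 2"
  by (auto simp: defs0 split: if_splits)

lemma bc5: "best_choice N0 E0 u0 F0 phi0 1 [0 \<mapsto> 0, 2 \<mapsto> 2] v \<longleftrightarrow> v = 1"
  by (auto simp: defs0 split: if_splits)

lemma N0_ne1: "1 \<notin> D \<Longrightarrow> D \<noteq> N0" by (auto simp: N0_def)
lemma N0_ne2: "2 \<notin> D \<Longrightarrow> D \<noteq> N0" by (auto simp: N0_def)

lemma inv:
  assumes "reach N0 N0 E0 u0 F0 phi0 sigma0 ((\<lambda>_. None)(0 := t)) P s"
    and "t = None \<or> t = Some 1"
  shows "(P = Map.empty \<and> s = None) \<or> (P = [0 \<mapsto> 0] \<and> s = t) \<or>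
         (P = [0 \<mapsto> 0, 1 \<mapsto> 2] \<and> s = None) \<or> (P = [0 \<mapsto> 0, 1 \<mapsto> 2, 2 \<mapsto> 1] \<and> s = None)"
  using assms
proof (induction rule: reach.induct)
  case init
  then show ?case by simp
next
  case (select P a v)
  from select.IH[OF select.prems] have
    "P = Map.empty \<or> P = [0 \<mapsto> 0] \<or> P = [0 \<mapsto> 0, 1 \<mapsto> 2] \<or> P = [0 \<mapsto> 0, 1 \<mapsto> 2, 2 \<mapsto> 1]"
    by blast
  then show ?case
  proof (elim disjE)
    assume P: "P = Map.empty"
    have "a = 0" using select.hyps(3) P by (simp add: sigma0_def)
    then have "v = 0" using select.hyps(4) P bc1 by simp
    then show ?thesis using P \<open>a = 0\<close> select.prems by (auto simp: forced_next_def N0_def)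
  next
    assume P: "P = [0 \<mapsto> 0]"
    have "a = 1" using select.hyps(3) P by (simp add: sigma0_def)
    then have "v = 2" using select.hyps(4) P bc2 by simp
    then have "P(a \<mapsto> v) = [0 \<mapsto> 0, 1 \<mapsto> 2]" using P \<open>a = 1\<close> by simp
    moreover have "forced_next N0 (insert a (dom P)) (((\<lambda>_. None)(0 := t)) a) = None"
      using \<open>a = 1\<close> by (simp add: forced_next_def)
    ultimately show ?thesis by (simp only: simp_thms)
  next
    assume P: "P = [0 \<mapsto> 0, 1 \<mapsto> 2]"
    have "a = 2" using select.hyps(3) P by (simp add: sigma0_def)
    then have "v = 1" using select.hyps(4) P bc3 by simp
    then have "P(a \<mapsto> v) = [0 \<mapsto> 0, 1 \<mapsto> 2, 2 \<mapsto> 1]" using P \<open>a = 2\<close> by simp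
    moreover have "forced_next N0 (insert a (dom P)) (((\<lambda>_. None)(0 := t)) a) = None"
      using \<open>a = 2\<close> by (simp add: forced_next_def)
    ultimately show ?thesis by (simp only: simp_thms)
  next
    assume P: "P = [0 \<mapsto> 0, 1 \<mapsto> 2, 2 \<mapsto> 1]"
    have "dom P = N0" using P by (auto simp: N0_def)
    then show ?thesis using select.hyps(2) by simp
  qed
next
  case (forced P b v)
  from forced.IH[OF forced.prems] forced.prems have "P = [0 \<mapsto> 0] \<and> b = 1"
    by auto
  then have "v = 2" using forced.hyps(2) bc2 by simp
  then have "P(b \<mapsto> v) = [0 \<mapsto> 0, 1 \<mapsto> 2]" using \<open>P = [0 \<mapsto> 0] \<and> b = 1\<close> by simp
  then show ?case by (simp only: simp_thms)
qed

theorem proposition4p5: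
  shows "\<exists>(N :: nat set) (V :: nat set) E u F phi sigma d i k A'.
     valid_instance N V E u F phi \<and> max_degree_le_one F \<and>
     distinct sigma \<and> set sigma = N \<and>
     (\<forall>a. truthful_decl F a (d a)) \<and>
     i \<in> N \<and> k \<in> N \<and> k \<noteq> i \<and> (i, k) \<notin> F \<and>
     mech_outcome N V E u F phi sigma (d(i := Some k)) A' \<and>
     (\<exists>A0. mech_outcome N V E u F phi sigma d A0) \<and>
     (\<forall>t A. truthful_decl F i t \<longrightarrow> mech_outcome N V E u F phi sigma (d(i := t)) A \<longrightarrow>
        utility E u F phi i A < utility E u F phi i A')"
proof -
  let ?d = "(\<lambda>_. None) :: nat \<Rightarrow> nat option"
  let ?A' = "(\<lambda>a. if a = 0 then 0 else if a = 1 then 1 else 2) :: nat \<Rightarrow> nat"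
  let ?A0 = "(\<lambda>a. if a = 0 then 0 else if a = 1 then 2 else 1) :: nat \<Rightarrow> nat"
  have vi: "valid_instance N0 N0 E0 u0 F0 phi0"
    by (auto simp: valid_instance_def N0_def E0_def u0_def F0_def phi0_def)
  have md: "max_degree_le_one F0"
    by (auto simp: max_degree_le_one_def F0_set2)
  have tr: "\<forall>a. truthful_decl F0 a (?d a)" by (simp add: truthful_decl_def)
  have r1: "reach N0 N0 E0 u0 F0 phi0 sigma0 (?d(0 := Some 2)) [0 \<mapsto> 0] (Some 2)"
  proof -
    have "reach N0 N0 E0 u0 F0 phi0 sigma0 (?d(0 := Some 2)) (Map.empty(0 \<mapsto> 0))
       (forced_next N0 (insert 0 (dom (Map.empty :: nat \<Rightarrow> nat option))) ((?d(0 := Some 2)) 0))"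
      by (rule reach.select[OF reach.init, where a=0 and v=0]) (simp_all add: bc1[simplified] sigma0_def N0_ne1 N0_ne2)
    then show ?thesis by (simp add: forced_next_def N0_def)
  qed
  have r2: "reach N0 N0 E0 u0 F0 phi0 sigma0 (?d(0 := Some 2)) [0 \<mapsto> 0, 2 \<mapsto> 2] None"
    by (rule reach.forced[OF r1, where v=2]) (simp add: bc4)
  have r3: "reach N0 N0 E0 u0 F0 phi0 sigma0 (?d(0 := Some 2)) [0 \<mapsto> 0, 2 \<mapsto> 2, 1 \<mapsto> 1] None"
  proof -
    have "reach N0 N0 E0 u0 F0 phi0 sigma0 (?d(0 := Some 2)) ([0 \<mapsto> 0, 2 \<mapsto> 2](1 \<mapsto> 1))
       (forced_next N0 (insert 1 (dom ([0 \<mapsto> 0, 2 \<mapsto> 2] :: nat \<Rightarrow> nat option))) ((?d(0 := Some 2)) 1))"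
      by (rule reach.select[OF r2, where a=1 and v=1]) (simp_all add: bc5[simplified] sigma0_def N0_ne1 N0_ne2)
    then show ?thesis by (simp add: forced_next_def N0_def)
  qed
  have mA': "mech_outcome N0 N0 E0 u0 F0 phi0 sigma0 (?d(0 := Some 2)) ?A'"
    unfolding mech_outcome_def
    apply (rule exI[of _ "[0 \<mapsto> 0, 2 \<mapsto> 2, 1 \<mapsto> 1] :: nat \<Rightarrow> nat option"])
    using r3 by (auto simp: N0_def)
  have q1: "reach N0 N0 E0 u0 F0 phi0 sigma0 ?d [0 \<mapsto> 0] None"
  proof -
    have "reach N0 N0 E0 u0 F0 phi0 sigma0 ?d (Map.empty(0 \<mapsto> 0))
       (forced_next N0 (insert 0 (dom (Map.empty :: nat \<Rightarrow> nat option))) (?d 0))"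
      by (rule reach.select[OF reach.init, where a=0 and v=0]) (simp_all add: bc1[simplified] sigma0_def N0_ne1 N0_ne2)
    then show ?thesis by (simp add: forced_next_def N0_def)
  qed
  have q2: "reach N0 N0 E0 u0 F0 phi0 sigma0 ?d [0 \<mapsto> 0, 1 \<mapsto> 2] None"
  proof -
    have "reach N0 N0 E0 u0 F0 phi0 sigma0 ?d ([0 \<mapsto> 0](1 \<mapsto> 2))
       (forced_next N0 (insert 1 (dom ([0 \<mapsto> 0] :: nat \<Rightarrow> nat option))) (?d 1))"
      by (rule reach.select[OF q1, where a=1 and v=2]) (simp_all add: bc2[simplified] sigma0_def N0_ne1 N0_ne2)
    then show ?thesis by (simp add: forced_next_def N0_def)
  qed
  have q3: "reach N0 N0 E0 u0 F0 phi0 sigma0 ?d [0 \<mapsto> 0, 1 \<mapsto> 2, 2 \<mapsto> 1] None"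
  proof -
    have "reach N0 N0 E0 u0 F0 phi0 sigma0 ?d ([0 \<mapsto> 0, 1 \<mapsto> 2](2 \<mapsto> 1))
       (forced_next N0 (insert 2 (dom ([0 \<mapsto> 0, 1 \<mapsto> 2] :: nat \<Rightarrow> nat option))) (?d 2))"
      by (rule reach.select[OF q2, where a=2 and v=1]) (simp_all add: bc3[simplified] sigma0_def N0_ne1 N0_ne2)
    then show ?thesis by (simp add: forced_next_def N0_def)
  qed
  have mA0: "mech_outcome N0 N0 E0 u0 F0 phi0 sigma0 ?d ?A0"
    unfolding mech_outcome_def
    apply (rule exI[of _ "[0 \<mapsto> 0, 1 \<mapsto> 2, 2 \<mapsto> 1] :: nat \<Rightarrow> nat option"])
    using q3 by (auto simp: N0_def)
  have uA': "utility E0 u0 F0 phi0 0 ?A' = 3/2"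
    by (simp add: utility_def F0_set2 u0_def phi0_def E0_def)
  have allt: "utility E0 u0 F0 phi0 0 A < utility E0 u0 F0 phi0 0 ?A'"
    if tt: "truthful_decl F0 0 t" and mo: "mech_outcome N0 N0 E0 u0 F0 phi0 sigma0 (?d(0 := t)) A" for t A
  proof -
    have t: "t = None \<or> t = Some 1" using tt by (auto simp: truthful_decl_def F0_mem)
    obtain P where P: "reach N0 N0 E0 u0 F0 phi0 sigma0 (?d(0 := t)) P None" "dom P = N0"
      "\<forall>a\<in>N0. P a = Some (A a)"
      using mo unfolding mech_outcome_def by blast
    have "P = [0 \<mapsto> 0, 1 \<mapsto> 2, 2 \<mapsto> 1]"
      using inv[OF P(1) t] P(2) t by (auto simp: N0_def)
    then have "A 0 = 0" "A 1 = 2" using P(3) by (auto simp: N0_def)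
    then have "utility E0 u0 F0 phi0 0 A = 1"
      by (simp add: utility_def F0_set2 u0_def phi0_def E0_def doubleton_eq_iff)
    then show ?thesis using uA' by simp
  qed
  show ?thesis
    apply (rule exI[of _ N0], rule exI[of _ N0], rule exI[of _ E0], rule exI[of _ u0],
        rule exI[of _ F0], rule exI[of _ phi0], rule exI[of _ sigma0], rule exI[of _ ?d],
        rule exI[of _ 0], rule exI[of _ 2], rule exI[of _ ?A'])
    using vi md tr mA' mA0 allt
    by (auto simp: sigma0_def N0_def F0_mem)
qed

end
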